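(* Let $X$ be a proper geodesic metric space with horofunction boundary $\partial_hX$ (based at $o$). Let $\alpha,\beta:[0,\infty)\to X$ be geodesic rays emanating from $o$, ending at $\alpha^+,\beta^+\in\partial_hX$. Suppose there are sequences of real numbers $s_n,r_n\to\infty$ such that $\limsup_{n\to\infty}r_n/s_n<1$ and, for all sufficiently large $n$, $\limsup_{t\to\infty}d(o,[\alpha(s_n),\beta(t)])\le r_n$ (for some choice of geodesic segments $[\alpha(s_n),\beta(t)]$). Then $[\alpha^+]_s\ne[\beta^+]_s$.
   Context: For $y\in X$, $b_y(x)=d(x,y)-d(o,y)$; $\partial_hX$ consists of pointwise limits $b_\xi=\lim b_{y_n}$ along unbounded sequences $y_n$. A geodesic ray $\alpha$ converges to $\alpha^+$ with horofunction $\alpha^+(x)=\lim_{t\to\infty}[d(\alpha(t),x)-t]$. Two boundary points $\xi,\eta$ have sublinear difference, written $[\xi]_s=[\eta]_s$, if $\lim_{n\to\infty}\sup_{d(o,x)\ge n}\frac{|b_\xi(x)-b_\eta(x)|}{d(o,x)}=0$. *)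

theory Defs
  imports "HOL-Analysis.Analysis"
begin

definition proper_space :: "'a::metric_space itself \<Rightarrow> bool" where
  "proper_space _ \<longleftrightarrow> (\<forall>(x::'a) r. compact (cball x r))"

definition geodesic_segment :: "(real \<Rightarrow> 'a::metric_space) \<Rightarrow> 'a \<Rightarrow> 'a \<Rightarrow> bool" where
  "geodesic_segment \<gamma> x y \<longleftrightarrow> \<gamma> 0 = x \<and> \<gamma> (dist x y) = y \<and>
     (\<forall>s\<in>{0..dist x y}. \<forall>t\<in>{0..dist x y}. dist (\<gamma> s) (\<gamma> t) = \<bar>s - t\<bar>)"

definition geodesic_space :: "'a::metric_space itself \<Rightarrow> bool" where
  "geodesic_space _ \<longleftrightarrow> (\<forall>x y::'a. \<exists>\<gamma>. geodesic_segment \<gamma> x y)"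

definition geodesic_ray :: "(real \<Rightarrow> 'a::metric_space) \<Rightarrow> 'a \<Rightarrow> bool" where
  "geodesic_ray \<alpha> x0 \<longleftrightarrow> \<alpha> 0 = x0 \<and>
     (\<forall>s\<ge>0. \<forall>t\<ge>0. dist (\<alpha> s) (\<alpha> t) = \<bar>s - t\<bar>)"

definition ray_horofunction :: "(real \<Rightarrow> 'a::metric_space) \<Rightarrow> 'a \<Rightarrow> real" where
  "ray_horofunction \<alpha> x = Lim at_top (\<lambda>t. dist (\<alpha> t) x - t)"

definition sublinear_equiv :: "'a::metric_space \<Rightarrow> ('a \<Rightarrow> real) \<Rightarrow> ('a \<Rightarrow> real) \<Rightarrow> bool" where
  "sublinear_equiv x0 f g \<longleftrightarrow>
     (\<lambda>n::nat. SUP x\<in>{x. dist x0 x \<ge> real n}. \<bar>f x - g x\<bar> / dist x0 x) \<longlonglongrightarrow> 0"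

end

theory Submission
  imports Defs
begin

lemma ray_dist0: assumes "geodesic_ray \<beta> x0" "t \<ge> 0" shows "dist x0 (\<beta> t) = t"
  using assms unfolding geodesic_ray_def by (metis abs_of_nonneg diff_zero dist_commute order_refl)

lemma horo_tendsto:
  assumes g: "geodesic_ray \<beta> x0"
  shows "((\<lambda>t. dist (\<beta> t) y - t) \<longlongrightarrow> ray_horofunction \<beta> y) at_top"
proof -
  define f where "f = (\<lambda>t. dist (\<beta> t) y - t)"
  have mono: "f t \<le> f t0" if "0 \<le> t0" "t0 \<le> t" for t t0
  proof -
    have "dist (\<beta> t) (\<beta> t0) = t - t0" using g that unfolding geodesic_ray_def by auto
    moreover have "dist (\<beta> t) y \<le> dist (\<beta> t) (\<beta> t0) + dist (\<beta> t0) y" by (rule dist_triangle)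
    ultimately show ?thesis unfolding f_def by linarith
  qed
  have low: "- dist x0 y \<le> f t" if "t \<ge> 0" for t
  proof -
    have "dist x0 (\<beta> t) = t" using ray_dist0[OF g that] .
    moreover have "dist x0 (\<beta> t) \<le> dist x0 y + dist (\<beta> t) y" by (metis dist_commute dist_triangle)
    ultimately show ?thesis unfolding f_def by linarith
  qed
  define L where "L = Inf (f ` {0..})"
  have bdd: "bdd_below (f ` {0..})" using low by (auto intro!: bdd_belowI[of _ "- dist x0 y"])
  have "(f \<longlongrightarrow> L) at_top"
  proof (rule order_tendstoI)
    fix a assume "a < L"
    have "\<forall>\<^sub>F t in at_top. t \<ge> (0::real)" by (rule eventually_ge_at_top)
    then show "\<forall>\<^sub>F t in at_top. a < f t"
    proof (rule eventually_mono)
      fix t :: real assume "t \<ge> 0"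
      then have "L \<le> f t" unfolding L_def using bdd by (auto intro!: cInf_lower)
      then show "a < f t" using \<open>a < L\<close> by linarith
    qed
  next
    fix a assume "L < a"
    then obtain u where u: "u \<in> f ` {0..}" "u < a" unfolding L_def
      using cInf_lessD[of "f ` {0..}" a] by auto
    then obtain t0 where t0: "t0 \<ge> 0" "f t0 < a" by auto
    have "\<forall>\<^sub>F t in at_top. t \<ge> t0" by (rule eventually_ge_at_top)
    then show "\<forall>\<^sub>F t in at_top. f t < a"
      by (rule eventually_mono) (use mono t0 in fastforce)
  qed
  then have "Lim at_top f = L" by (intro tendsto_Lim) auto
  then show ?thesis using \<open>(f \<longlongrightarrow> L) at_top\<close> unfolding ray_horofunction_def f_def by simp
qed

lemma horo_bound:
  assumes g: "geodesic_ray \<beta> x0"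
  shows "\<bar>ray_horofunction \<beta> y\<bar> \<le> dist x0 y"
proof -
  have ev: "\<forall>\<^sub>F t in at_top. t \<ge> (0::real)" by (rule eventually_ge_at_top)
  have "ray_horofunction \<beta> y \<le> dist x0 y"
  proof (rule tendsto_upperbound[OF horo_tendsto[OF g]])
    show "\<forall>\<^sub>F t in at_top. dist (\<beta> t) y - t \<le> dist x0 y"
      using ev by (rule eventually_mono) (metis ray_dist0[OF g] dist_commute dist_triangle diff_le_eq add.commute)
  qed simp
  moreover have "- dist x0 y \<le> ray_horofunction \<beta> y"
  proof (rule tendsto_lowerbound[OF horo_tendsto[OF g]])
    show "\<forall>\<^sub>F t in at_top. - dist x0 y \<le> dist (\<beta> t) y - t"
      using ev by (rule eventually_mono) (smt (verit) ray_dist0[OF g] dist_commute dist_triangle)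
  qed simp
  ultimately show ?thesis by linarith
qed

lemma horo_on_ray:
  assumes g: "geodesic_ray \<alpha> x0" and "s \<ge> 0"
  shows "ray_horofunction \<alpha> (\<alpha> s) = - s"
proof -
  have "((\<lambda>t. dist (\<alpha> t) (\<alpha> s) - t) \<longlongrightarrow> - s) at_top"
  proof (rule tendsto_eventually)
    have "\<forall>\<^sub>F t in at_top. t \<ge> s" by (rule eventually_ge_at_top)
    then show "\<forall>\<^sub>F t in at_top. dist (\<alpha> t) (\<alpha> s) - t = - s"
      by (rule eventually_mono) (use g assms(2) in \<open>auto simp: geodesic_ray_def\<close>)
  qed
  from tendsto_unique[OF _ horo_tendsto[OF g, of "\<alpha> s"] this] show ?thesis by simp
qed


lemma horo_lower:
  assumes ga: "geodesic_ray \<alpha> x0" and gb: "geodesic_ray \<beta> x0" and S: "S \<ge> 0"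
    and seg: "\<forall>t. geodesic_segment (\<gamma> t) (\<alpha> S) (\<beta> t)"
    and ls: "Limsup at_top (\<lambda>t. ereal (infdist x0 ((\<gamma> t) ` {0..dist (\<alpha> S) (\<beta> t)}))) \<le> ereal R"
  shows "S - 2 * R - 2 \<le> ray_horofunction \<beta> (\<alpha> S)"
proof (rule tendsto_lowerbound[OF horo_tendsto[OF gb]])
  have "Limsup at_top (\<lambda>t. ereal (infdist x0 ((\<gamma> t) ` {0..dist (\<alpha> S) (\<beta> t)}))) < ereal (R + 1)"
    using ls by (rule order_le_less_trans) simp
  from Limsup_lessD[OF this] have ev1: "\<forall>\<^sub>F t in at_top. infdist x0 ((\<gamma> t) ` {0..dist (\<alpha> S) (\<beta> t)}) < R + 1"
    by simp
  have ev2: "\<forall>\<^sub>F t in at_top. t \<ge> (0::real)" by (rule eventually_ge_at_top)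
  show "\<forall>\<^sub>F t in at_top. S - 2 * R - 2 \<le> dist (\<beta> t) (\<alpha> S) - t"
    using ev1 ev2
  proof (eventually_elim)
    case (elim t)
    define D where "D = dist (\<alpha> S) (\<beta> t)"
    have ne: "(\<gamma> t) ` {0..D} \<noteq> {}" using D_def by auto
    have "(INF a\<in>(\<gamma> t) ` {0..D}. dist x0 a) < R + 1"
      using elim(1) infdist_notempty[OF ne] D_def by simp
    then obtain a where a: "a \<in> (\<gamma> t) ` {0..D}" "dist x0 a < R + 1"
      using cInf_lessD[of "(\<lambda>a. dist x0 a) ` (\<gamma> t) ` {0..D}" "R+1"] ne by auto
    then obtain u where u: "u \<in> {0..D}" "a = \<gamma> t u" by auto
    have gs: "geodesic_segment (\<gamma> t) (\<alpha> S) (\<beta> t)" using seg by auto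
    have D0: "D \<in> {0..D}" "0 \<in> {0..D}" using u by auto
    have d1: "dist (\<alpha> S) a = u"
    proof -
      have "dist (\<gamma> t 0) (\<gamma> t u) = \<bar>0 - u\<bar>" using gs u D0 unfolding geodesic_segment_def D_def[symmetric] by blast
      moreover have "\<gamma> t 0 = \<alpha> S" using gs unfolding geodesic_segment_def by blast
      ultimately show ?thesis using u by simp
    qed
    have d2: "dist a (\<beta> t) = D - u"
    proof -
      have "dist (\<gamma> t u) (\<gamma> t D) = \<bar>u - D\<bar>" using gs u D0 unfolding geodesic_segment_def D_def[symmetric] by blast
      moreover have "\<gamma> t D = \<beta> t" using gs unfolding geodesic_segment_def D_def by blast
      ultimately show ?thesis using u by simp
    qed
    have "dist x0 (\<alpha> S) = S" using ray_dist0[OF ga S] .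
    moreover have "dist x0 (\<beta> t) = t" using ray_dist0[OF gb elim(2)] .
    moreover have "dist x0 (\<alpha> S) \<le> dist x0 a + dist (\<alpha> S) a" by (metis dist_commute dist_triangle)
    moreover have "dist x0 (\<beta> t) \<le> dist x0 a + dist a (\<beta> t)" by (rule dist_triangle)
    ultimately have "S + t - 2 * (R + 1) \<le> D" using d1 d2 a(2) by (smt (verit))
    then show ?case unfolding D_def by (simp add: dist_commute algebra_simps)
  qed
qed simp

theorem lemma2p5:
  fixes x0 :: "'a::metric_space" and \<alpha> \<beta> :: "real \<Rightarrow> 'a" and s r :: "nat \<Rightarrow> real"
  assumes "proper_space TYPE('a)" and "geodesic_space TYPE('a)"
    and "geodesic_ray \<alpha> x0" and "geodesic_ray \<beta> x0"
    and "filterlim s at_top sequentially" and "filterlim r at_top sequentially"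
    and "limsup (\<lambda>n. ereal (r n / s n)) < 1"
    and "\<forall>\<^sub>F n in sequentially. \<exists>\<gamma> :: real \<Rightarrow> real \<Rightarrow> 'a.
           (\<forall>t. geodesic_segment (\<gamma> t) (\<alpha> (s n)) (\<beta> t)) \<and>
           Limsup at_top (\<lambda>t. ereal (infdist x0 ((\<gamma> t) ` {0..dist (\<alpha> (s n)) (\<beta> t)}))) \<le> ereal (r n)"
  shows "\<not> sublinear_equiv x0 (ray_horofunction \<alpha>) (ray_horofunction \<beta>)"
proof
  assume H: "sublinear_equiv x0 (ray_horofunction \<alpha>) (ray_horofunction \<beta>)"
  note ga = assms(3) and gb = assms(4)
  obtain z where z: "limsup (\<lambda>n. ereal (r n / s n)) < z" "z < 1" using assms(7) dense by blast
  then obtain c where zc: "z = ereal c" by (cases z) auto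
  have c1: "c < 1" using z zc by simp
  define g where "g = (\<lambda>x. \<bar>ray_horofunction \<alpha> x - ray_horofunction \<beta> x\<bar> / dist x0 x)"
  define F where "F = (\<lambda>n::nat. SUP x\<in>{x. dist x0 x \<ge> real n}. g x)"
  have "F \<longlonglongrightarrow> 0" using H unfolding sublinear_equiv_def F_def g_def .
  from order_tendstoD(2)[OF this] c1 have "\<forall>\<^sub>F m in sequentially. F m < 1 - c" by simp
  then obtain N where N: "F N < 1 - c" by (meson eventually_sequentially order_refl)
  have gle: "g x \<le> 2" for x
  proof (cases "dist x0 x = 0")
    case True then show ?thesis by (simp add: g_def)
  next
    case False
    have "\<bar>ray_horofunction \<alpha> x - ray_horofunction \<beta> x\<bar> \<le> 2 * dist x0 x"
      using horo_bound[OF ga, of x] horo_bound[OF gb, of x] by linarith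
    then show ?thesis using False by (simp add: g_def divide_le_eq)
  qed
  have e1: "\<forall>\<^sub>F n in sequentially. r n / s n < c"
    using Limsup_lessD[OF z(1)[unfolded zc]] by simp
  have e2: "\<forall>\<^sub>F n in sequentially. s n \<ge> max (max 1 (real N)) (2 / (1 - c))"
    using assms(5) unfolding filterlim_at_top by blast
  from e1 e2 assms(8) have "\<forall>\<^sub>F n in sequentially. r n / s n < c \<and> s n \<ge> max (max 1 (real N)) (2 / (1 - c)) \<and>
      (\<exists>\<gamma> :: real \<Rightarrow> real \<Rightarrow> 'a.
           (\<forall>t. geodesic_segment (\<gamma> t) (\<alpha> (s n)) (\<beta> t)) \<and>
           Limsup at_top (\<lambda>t. ereal (infdist x0 ((\<gamma> t) ` {0..dist (\<alpha> (s n)) (\<beta> t)}))) \<le> ereal (r n))"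
    by eventually_elim auto
  then obtain M where "\<forall>m\<ge>M. r m / s m < c \<and> s m \<ge> max (max 1 (real N)) (2 / (1 - c)) \<and>
      (\<exists>\<gamma> :: real \<Rightarrow> real \<Rightarrow> 'a.
           (\<forall>t. geodesic_segment (\<gamma> t) (\<alpha> (s m)) (\<beta> t)) \<and>
           Limsup at_top (\<lambda>t. ereal (infdist x0 ((\<gamma> t) ` {0..dist (\<alpha> (s m)) (\<beta> t)}))) \<le> ereal (r m))"
    unfolding eventually_sequentially by blast
  then have "r M / s M < c \<and> s M \<ge> max (max 1 (real N)) (2 / (1 - c)) \<and>
      (\<exists>\<gamma> :: real \<Rightarrow> real \<Rightarrow> 'a.
           (\<forall>t. geodesic_segment (\<gamma> t) (\<alpha> (s M)) (\<beta> t)) \<and>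
           Limsup at_top (\<lambda>t. ereal (infdist x0 ((\<gamma> t) ` {0..dist (\<alpha> (s M)) (\<beta> t)}))) \<le> ereal (r M))"
    by blast
  then obtain n \<gamma> where n: "r n / s n < c" "s n \<ge> max (max 1 (real N)) (2 / (1 - c))"
      "\<forall>t. geodesic_segment (\<gamma> t) (\<alpha> (s n)) (\<beta> t)"
      "Limsup at_top (\<lambda>t. ereal (infdist x0 ((\<gamma> t) ` {0..dist (\<alpha> (s n)) (\<beta> t)}))) \<le> ereal (r n)"
    by blast
  define S where "S = s n"
  define R where "R = r n"
  have S1: "S \<ge> 1" and SN: "S \<ge> real N" and Sc: "S \<ge> 2 / (1 - c)" using n(2) S_def by auto
  have RS: "R < c * S" using n(1) S1 unfolding S_def R_def by (simp add: divide_less_eq)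
  have Sc': "2 \<le> (1 - c) * S" using Sc c1 by (simp add: divide_le_eq mult.commute)
  have lowb: "S - 2 * R - 2 \<le> ray_horofunction \<beta> (\<alpha> S)"
    using horo_lower[OF ga gb _ n(3) n(4)] S1 unfolding S_def R_def by simp
  have ha: "ray_horofunction \<alpha> (\<alpha> S) = - S" using horo_on_ray[OF ga] S1 by simp
  have dS: "dist x0 (\<alpha> S) = S" using ray_dist0[OF ga] S1 by simp
  have "(1 - c) * S \<le> \<bar>ray_horofunction \<alpha> (\<alpha> S) - ray_horofunction \<beta> (\<alpha> S)\<bar>"
    using lowb ha RS Sc' by (simp add: algebra_simps)
  then have "1 - c \<le> g (\<alpha> S)" unfolding g_def dS using S1 by (simp add: le_divide_eq)
  also have "g (\<alpha> S) \<le> F N" unfolding F_def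
    by (rule cSUP_upper) (use dS SN gle in \<open>auto intro!: bdd_aboveI2[where M=2]\<close>)
  finally show False using N by simp
qed
end
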